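(* Let $\mathcal{A}$ be a Desargues affine plane, let $\ell_1=\ell^{OI}$ and $\ell_2$ be lines of $\mathcal{A}$ ($O\neq I$), and let $P_P:\ell_1\to\ell_2$ be a parallel projection. Equip $\ell_1$ with the skew field structure with zero $O$ and unit $I$, and $\ell_2$ with the skew field structure with zero $P_P(O)$ and unit $P_P(I)$. Then for all $A,B\in\ell_1$ with $B\neq O$, \[ P_P(r(A:B))=r(P_P(A):P_P(B)), \] where the ratio on the left is computed in $\ell_1$ and the ratio on the right in $\ell_2$.
   Context: A Desargues affine plane is an incidence structure of points and lines in which any two distinct points lie on exactly one line, through a point not on a line $\ell$ there is exactly one line disjoint from $\ell$ (Playfair), there exist three non-collinear points, and Desargues' axiom holds: if $A,B,C,A',B',C'$ are points such that the pairwise distinct lines $AA',BB',CC'$ are either all parallel or all pass through one point, and $AB\parallel A'B'$, $BC\parallel B'C'$ (with $AB\neq A'B'$, $BC\neq B'C'$, $A\ne C$, $A'\ne C'$), then $AC\parallel A'C'$. Skew field on a line: for distinct points $O,I$ and points $A,B$ on the line $\ell^{OI}$, addition is defined by: choose a point $B_1\notin\ell^{OI}$; let $P_1$ be the intersection of the line through $B_1$ parallel to $\ell^{OI}$ with the line through $A$ parallel to $OB_1$; then $A+B$ is the intersection of $\ell^{OI}$ with the line through $P_1$ parallel to $BB_1$. Multiplication is defined by: choose $B_1\notin\ell^{OI}$; let $P_1$ be the intersection of the line through $A$ parallel to $IB_1$ with the line $OB_1$; then $A\cdot B$ is the intersection of $\ell^{OI}$ with the line through $P_1$ parallel to $BB_1$.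 These operations do not depend on the choice of $B_1$ and make $(\ell^{OI},+,\cdot)$ a skew field with zero $O$ and unit $I$; the same construction applies to any line with any chosen pair of distinct points as zero and unit. $X^{-1}$ denotes the multiplicative inverse. Ratio of two points on a line with chosen zero $O$: $r(A:B)=B^{-1}A$ for $B\neq O$. A parallel projection between lines $\ell_1,\ell_2$ is a map $P_P:\ell_1\to\ell_2$ such that for all $A,B\in\ell_1$ the lines $A\,P_P(A)$ and $B\,P_P(B)$ are parallel (it is a bijection). *)

theory Defs
  imports Main
begin

text \<open>Incidence structure: points are the elements of the type 'p, lines are
  the members of a set L of point sets; incidence is membership.\<close>

definition par :: "'p set \<Rightarrow> 'p set \<Rightarrow> bool" where
  "par l m \<longleftrightarrow> l = m \<or> l \<inter> m = {}"

definition ln :: "'p set set \<Rightarrow> 'p \<Rightarrow> 'p \<Rightarrow> 'p set" where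
  "ln L A B = (THE l. l \<in> L \<and> A \<in> l \<and> B \<in> l)"

definition parl :: "'p set set \<Rightarrow> 'p \<Rightarrow> 'p set \<Rightarrow> 'p set" where
  "parl L P l = (THE m. m \<in> L \<and> P \<in> m \<and> par m l)"

definition meet :: "'p set \<Rightarrow> 'p set \<Rightarrow> 'p" where
  "meet l m = (THE X. X \<in> l \<and> X \<in> m)"

definition collinear :: "'p set set \<Rightarrow> 'p \<Rightarrow> 'p \<Rightarrow> 'p \<Rightarrow> bool" where
  "collinear L A B C \<longleftrightarrow> (\<exists>l\<in>L. A \<in> l \<and> B \<in> l \<and> C \<in> l)"

definition affine_plane :: "'p set set \<Rightarrow> bool" where
  "affine_plane L \<longleftrightarrow>
     (\<forall>A B. A \<noteq> B \<longrightarrow> (\<exists>!l. l \<in> L \<and> A \<in> l \<and> B \<in> l)) \<and>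
     (\<forall>l\<in>L. \<forall>P. P \<notin> l \<longrightarrow> (\<exists>!m. m \<in> L \<and> P \<in> m \<and> m \<inter> l = {})) \<and>
     (\<exists>A B C. \<not> collinear L A B C)"

definition desargues :: "'p set set \<Rightarrow> bool" where
  "desargues L \<longleftrightarrow>
     (\<forall>A B C A' B' C'.
        A \<noteq> A' \<and> B \<noteq> B' \<and> C \<noteq> C' \<and>
        A \<noteq> B \<and> A' \<noteq> B' \<and> B \<noteq> C \<and> B' \<noteq> C' \<and> A \<noteq> C \<and> A' \<noteq> C' \<and>
        ln L A A' \<noteq> ln L B B' \<and> ln L B B' \<noteq> ln L C C' \<and> ln L A A' \<noteq> ln L C C' \<and>
        ((par (ln L A A') (ln L B B') \<and> par (ln L B B') (ln L C C') \<and>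
          par (ln L A A') (ln L C C')) \<or>
         (\<exists>P. P \<in> ln L A A' \<and> P \<in> ln L B B' \<and> P \<in> ln L C C')) \<and>
        par (ln L A B) (ln L A' B') \<and> ln L A B \<noteq> ln L A' B' \<and>
        par (ln L B C) (ln L B' C') \<and> ln L B C \<noteq> ln L B' C'
      \<longrightarrow> par (ln L A C) (ln L A' C'))"

definition desargues_affine_plane :: "'p set set \<Rightarrow> bool" where
  "desargues_affine_plane L \<longleftrightarrow> affine_plane L \<and> desargues L"

text \<open>Addition on the line OI with zero O (the auxiliary point B1 is any
  point off the line; the result does not depend on the choice).\<close>
definition add_line :: "'p set set \<Rightarrow> 'p \<Rightarrow> 'p \<Rightarrow> 'p \<Rightarrow> 'p \<Rightarrow> 'p" where
  "add_line L O1 I1 A B =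
     (let l = ln L O1 I1;
          B1 = (SOME B1. B1 \<notin> l);
          P1 = meet (parl L B1 l) (parl L A (ln L O1 B1))
      in meet l (parl L P1 (ln L B B1)))"

definition mul_line :: "'p set set \<Rightarrow> 'p \<Rightarrow> 'p \<Rightarrow> 'p \<Rightarrow> 'p \<Rightarrow> 'p" where
  "mul_line L O1 I1 A B =
     (let l = ln L O1 I1;
          B1 = (SOME B1. B1 \<notin> l);
          P1 = meet (parl L A (ln L I1 B1)) (ln L O1 B1)
      in meet l (parl L P1 (ln L B B1)))"

definition inv_line :: "'p set set \<Rightarrow> 'p \<Rightarrow> 'p \<Rightarrow> 'p \<Rightarrow> 'p" where
  "inv_line L O1 I1 X =
     (THE Y. Y \<in> ln L O1 I1 \<and> mul_line L O1 I1 X Y = I1 \<and> mul_line L O1 I1 Y X = I1)"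

definition ratio :: "'p set set \<Rightarrow> 'p \<Rightarrow> 'p \<Rightarrow> 'p \<Rightarrow> 'p \<Rightarrow> 'p" where
  "ratio L O1 I1 A B = mul_line L O1 I1 (inv_line L O1 I1 B) A"

definition parallel_projection ::
  "'p set set \<Rightarrow> 'p set \<Rightarrow> 'p set \<Rightarrow> ('p \<Rightarrow> 'p) \<Rightarrow> bool" where
  "parallel_projection L l1 l2 P \<longleftrightarrow>
     l1 \<in> L \<and> l2 \<in> L \<and> bij_betw P l1 l2 \<and>
     (\<exists>d\<in>L. \<not> par d l1 \<and>
        (\<forall>A\<in>l1. P A \<noteq> A \<longrightarrow> par (ln L A (P A)) d))"

end

theory Submission
  imports Defs
begin


locale dap =
  fixes L :: "'p set set"
  assumes dap: "desargues_affine_plane L"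
  and two: "\<exists>X Y::'p. X \<noteq> Y"
begin

lemma ap: "affine_plane L" using dap by (simp add: desargues_affine_plane_def)
lemma dsg: "desargues L" using dap by (simp add: desargues_affine_plane_def)

lemma ax1: "A \<noteq> B \<Longrightarrow> \<exists>!l. l \<in> L \<and> A \<in> l \<and> B \<in> l"
proof -
  have "\<forall>A B. A \<noteq> B \<longrightarrow> (\<exists>!l. l \<in> L \<and> A \<in> l \<and> B \<in> l)"
    using ap[unfolded affine_plane_def] by (rule conjunct1)
  then show "A \<noteq> B \<Longrightarrow> \<exists>!l. l \<in> L \<and> A \<in> l \<and> B \<in> l" by blast
qed

lemma ax2: "l \<in> L \<Longrightarrow> P \<notin> l \<Longrightarrow> \<exists>!m. m \<in> L \<and> P \<in> m \<and> m \<inter> l = {}"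
proof -
  have "\<forall>l\<in>L. \<forall>P. P \<notin> l \<longrightarrow> (\<exists>!m. m \<in> L \<and> P \<in> m \<and> m \<inter> l = {})"
    using ap[unfolded affine_plane_def] by (elim conjE)
  then show "l \<in> L \<Longrightarrow> P \<notin> l \<Longrightarrow> \<exists>!m. m \<in> L \<and> P \<in> m \<and> m \<inter> l = {}" by blast
qed

lemma ax3: "\<exists>A B C. \<not> collinear L A B C"
  using ap[unfolded affine_plane_def] by (elim conjE)

lemma ln_props: "A \<noteq> B \<Longrightarrow> ln L A B \<in> L \<and> A \<in> ln L A B \<and> B \<in> ln L A B"
  unfolding ln_def by (rule theI'[of "\<lambda>l. l \<in> L \<and> A \<in> l \<and> B \<in> l"]) (rule ax1)

lemma ln_in[simp]: "A \<noteq> B \<Longrightarrow> ln L A B \<in> L"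
  and ln_A[simp]: "A \<noteq> B \<Longrightarrow> A \<in> ln L A B"
  and ln_B[simp]: "A \<noteq> B \<Longrightarrow> B \<in> ln L A B"
  using ln_props by auto

lemma ln_eq: "l \<in> L \<Longrightarrow> A \<in> l \<Longrightarrow> B \<in> l \<Longrightarrow> A \<noteq> B \<Longrightarrow> ln L A B = l"
  using ax1 ln_props by blast

lemma ln_sym: "ln L A B = ln L B A"
  unfolding ln_def by (simp add: conj_ac)

lemma lines_eq: "l \<in> L \<Longrightarrow> m \<in> L \<Longrightarrow> A \<in> l \<Longrightarrow> B \<in> l \<Longrightarrow> A \<in> m \<Longrightarrow> B \<in> m \<Longrightarrow> A \<noteq> B \<Longrightarrow> l = m"
  using ax1 by blast

lemma par_refl[simp]: "par l l" unfolding par_def by simp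
lemma par_sym: "par l m \<Longrightarrow> par m l" unfolding par_def by blast

lemma par_ex: "l \<in> L \<Longrightarrow> \<exists>!m. m \<in> L \<and> P \<in> m \<and> par m l"
proof (cases "P \<in> l")
  case True
  assume l: "l \<in> L"
  show ?thesis
  proof (rule ex1I[of _ l])
    show "l \<in> L \<and> P \<in> l \<and> par l l" using l True by simp
    fix m' assume "m' \<in> L \<and> P \<in> m' \<and> par m' l"
    then show "m' = l" using True unfolding par_def by blast
  qed
next
  case False
  assume l: "l \<in> L"
  from ax2[OF l False] obtain m where m: "m \<in> L" "P \<in> m" "m \<inter> l = {}"
    and u: "\<And>m'. m' \<in> L \<and> P \<in> m' \<and> m' \<inter> l = {} \<Longrightarrow> m' = m" by metis
  show ?thesis
  proof (rule ex1I[of _ m])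
    show "m \<in> L \<and> P \<in> m \<and> par m l" using m unfolding par_def by blast
    fix m' assume "m' \<in> L \<and> P \<in> m' \<and> par m' l"
    then show "m' = m" using u False unfolding par_def by blast
  qed
qed

lemma parl_props: "l \<in> L \<Longrightarrow> parl L P l \<in> L \<and> P \<in> parl L P l \<and> par (parl L P l) l"
  unfolding parl_def by (rule theI'[of "\<lambda>m. m \<in> L \<and> P \<in> m \<and> par m l"]) (rule par_ex)

lemma parl_in[simp]: "l \<in> L \<Longrightarrow> parl L P l \<in> L"
  and parl_P[simp]: "l \<in> L \<Longrightarrow> P \<in> parl L P l"
  and parl_par: "l \<in> L \<Longrightarrow> par (parl L P l) l"
  using parl_props by auto

lemma parl_eq: "l \<in> L \<Longrightarrow> m \<in> L \<Longrightarrow> P \<in> m \<Longrightarrow> par m l \<Longrightarrow> parl L P l = m"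
  using par_ex parl_props by blast

lemma par_trans: "l \<in> L \<Longrightarrow> m \<in> L \<Longrightarrow> n \<in> L \<Longrightarrow> par l m \<Longrightarrow> par m n \<Longrightarrow> par l n"
proof -
  assume *: "l \<in> L" "m \<in> L" "n \<in> L" "par l m" "par m n"
  show "par l n"
  proof (cases "l \<inter> n = {}")
    case True then show ?thesis unfolding par_def by simp
  next
    case False
    then obtain P where "P \<in> l" "P \<in> n" by blast
    then have "parl L P m = l" "parl L P m = n" using * parl_eq par_sym by metis+
    then show ?thesis by simp
  qed
qed

lemma parl_cong: "l \<in> L \<Longrightarrow> m \<in> L \<Longrightarrow> par l m \<Longrightarrow> parl L P l = parl L P m"
  by (metis par_sym par_trans parl_eq parl_in parl_P parl_par)

lemma parl_same: "l \<in> L \<Longrightarrow> Q \<in> parl L P l \<Longrightarrow> parl L Q l = parl L P l"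
  by (simp add: parl_eq parl_par)

lemma parl_self: "l \<in> L \<Longrightarrow> P \<in> l \<Longrightarrow> parl L P l = l"
  by (simp add: parl_eq)

lemma share_nonpar: "l \<noteq> m \<Longrightarrow> P \<in> l \<Longrightarrow> P \<in> m \<Longrightarrow> \<not> par l m"
  unfolding par_def by blast

lemma meet_ex: "l \<in> L \<Longrightarrow> m \<in> L \<Longrightarrow> \<not> par l m \<Longrightarrow> \<exists>!X. X \<in> l \<and> X \<in> m"
  unfolding par_def using lines_eq by blast

lemma meet_props: "l \<in> L \<Longrightarrow> m \<in> L \<Longrightarrow> \<not> par l m \<Longrightarrow> meet l m \<in> l \<and> meet l m \<in> m"
  unfolding meet_def by (rule theI'[of "\<lambda>X. X \<in> l \<and> X \<in> m"]) (rule meet_ex)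

lemma meet_eq: "l \<in> L \<Longrightarrow> m \<in> L \<Longrightarrow> \<not> par l m \<Longrightarrow> X \<in> l \<Longrightarrow> X \<in> m \<Longrightarrow> meet l m = X"
  using meet_ex meet_props by blast

lemma meet_sym: "meet l m = meet m l"
  unfolding meet_def by (simp add: conj_ac)

lemma nonpar_parl: "l \<in> L \<Longrightarrow> m \<in> L \<Longrightarrow> \<not> par l m \<Longrightarrow> \<not> par l (parl L P m)"
  by (meson par_sym par_trans parl_in parl_par)

lemma nonpar_parl2: "l \<in> L \<Longrightarrow> m \<in> L \<Longrightarrow> \<not> par l m \<Longrightarrow> \<not> par (parl L P l) m"
  by (meson par_sym par_trans parl_in parl_par)

lemma ln_parl: "l \<in> L \<Longrightarrow> C \<in> parl L P l \<Longrightarrow> C \<noteq> P \<Longrightarrow> ln L P C = parl L P l"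
  by (simp add: ln_eq)

lemma par_ln_parl: "l \<in> L \<Longrightarrow> C \<in> parl L P l \<Longrightarrow> C \<noteq> P \<Longrightarrow> par (ln L P C) l"
  by (simp add: ln_parl parl_par)

lemma in_parl_iff: "l \<in> L \<Longrightarrow> C \<noteq> P \<Longrightarrow> C \<in> parl L P l \<longleftrightarrow> par (ln L P C) l"
proof
  assume "l \<in> L" "C \<noteq> P" "C \<in> parl L P l"
  then show "par (ln L P C) l" using par_ln_parl by blast
next
  assume a: "l \<in> L" "C \<noteq> P" "par (ln L P C) l"
  then have "parl L P l = ln L P C" by (intro parl_eq) auto
  then show "C \<in> parl L P l" using a by simp
qed

lemma noncol_distinct: assumes "\<not> collinear L A B C" shows "A \<noteq> B" "A \<noteq> C" "B \<noteq> C"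
proof -
  have pt: "\<exists>l\<in>L. X \<in> l" for X
  proof -
    obtain Y where "Y \<noteq> X" using two by metis
    then show ?thesis using ln_props by blast
  qed
  have col2: "collinear L X X Y" "collinear L X Y X" "collinear L Y X X" for X Y
  proof -
    have "\<exists>l\<in>L. X \<in> l \<and> Y \<in> l"
    proof (cases "X = Y")
      case True then show ?thesis using pt by auto
    next
      case False then show ?thesis using ln_props by blast
    qed
    then show "collinear L X X Y" "collinear L X Y X" "collinear L Y X X"
      unfolding collinear_def by auto
  qed
  show "A \<noteq> B" "A \<noteq> C" "B \<noteq> C" using assms col2 by metis+
qed

lemma point_off: "l \<in> L \<Longrightarrow> \<exists>P. P \<notin> l"
  using ax3 unfolding collinear_def by blast

lemma line_nonempty: "l \<in> L \<Longrightarrow> \<exists>P. P \<in> l"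
proof (rule ccontr)
  assume l: "l \<in> L" and "\<not> (\<exists>P. P \<in> l)"
  then have e: "l = {}" by blast
  obtain A B C where n: "\<not> collinear L A B C" using ax3 by blast
  note d = noncol_distinct[OF n]
  have "ln L A B = ln L A C"
    using ax2[OF l, of A] e d ln_props by blast
  then show False using n d ln_props unfolding collinear_def by metis
qed

lemma line_two: "l \<in> L \<Longrightarrow> \<exists>A B. A \<in> l \<and> B \<in> l \<and> A \<noteq> B"
proof (rule ccontr)
  assume l: "l \<in> L" and nt: "\<not> (\<exists>A B. A \<in> l \<and> B \<in> l \<and> A \<noteq> B)"
  obtain X where X: "X \<in> l" using line_nonempty[OF l] by blast
  with nt have lX: "l = {X}" by blast
  obtain A B C where n: "\<not> collinear L A B C" using ax3 by blast
  note d = noncol_distinct[OF n]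
  obtain Y where Y: "Y \<in> {A,B,C}" "Y \<noteq> X" using d by blast
  define nn where "nn = ln L X Y"
  have nn: "nn \<in> L" "X \<in> nn" "Y \<in> nn" using Y ln_props nn_def by auto
  obtain Z where Z: "Z \<in> {A,B,C}" "Z \<notin> nn" using n nn unfolding collinear_def by blast
  define k where "k = parl L Z nn"
  have k: "k \<in> L" "Z \<in> k" "par k nn" using nn parl_props k_def by auto
  have kd: "k \<inter> nn = {}" using k Z unfolding par_def by blast
  have "X \<notin> k" using kd nn by blast
  from ax2[OF k(1) this] have "\<exists>!m. m \<in> L \<and> X \<in> m \<and> m \<inter> k = {}" .
  moreover have "l \<in> L \<and> X \<in> l \<and> l \<inter> k = {}" using l lX \<open>X \<notin> k\<close> by blast
  moreover have "nn \<in> L \<and> X \<in> nn \<and> nn \<inter> k = {}" using nn kd by blast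
  ultimately have "l = nn" by blast
  then show False using lX nn Y by blast
qed

lemma other_point: "l \<in> L \<Longrightarrow> \<exists>B. B \<in> l \<and> B \<noteq> A"
  using line_two by metis

end


definition dil :: "'p set set \<Rightarrow> 'p \<Rightarrow> 'p \<Rightarrow> 'p \<Rightarrow> 'p \<Rightarrow> 'p" where
  "dil L O1 I1 Q X = meet (parl L X (ln L I1 Q)) (ln L O1 Q)"

definition mulQ :: "'p set set \<Rightarrow> 'p \<Rightarrow> 'p \<Rightarrow> 'p \<Rightarrow> 'p \<Rightarrow> 'p \<Rightarrow> 'p" where
  "mulQ L O1 I1 Q X Y = meet (ln L O1 I1) (parl L (dil L O1 I1 Q X) (ln L Y Q))"

lemma mul_line_mulQ: "mul_line L O1 I1 X Y = mulQ L O1 I1 (SOME B1. B1 \<notin> ln L O1 I1) X Y"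
  unfolding mul_line_def mulQ_def dil_def Let_def by simp

context dap
begin

lemma desarg:
  assumes "A \<noteq> A'" "B \<noteq> B'" "C \<noteq> C'" "A \<noteq> B" "A' \<noteq> B'" "B \<noteq> C" "B' \<noteq> C'" "A \<noteq> C" "A' \<noteq> C'"
    "ln L A A' \<noteq> ln L B B'" "ln L B B' \<noteq> ln L C C'" "ln L A A' \<noteq> ln L C C'"
    "(par (ln L A A') (ln L B B') \<and> par (ln L B B') (ln L C C') \<and> par (ln L A A') (ln L C C')) \<or>
     (\<exists>P. P \<in> ln L A A' \<and> P \<in> ln L B B' \<and> P \<in> ln L C C')"
    "par (ln L A B) (ln L A' B')" "ln L A B \<noteq> ln L A' B'"
    "par (ln L B C) (ln L B' C')" "ln L B C \<noteq> ln L B' C'"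
  shows "par (ln L A C) (ln L A' C')"
  apply (rule dsg[unfolded desargues_def, rule_format, of A A' B B' C C'])
  using assms by blast

lemma inter_unique: "l \<in> L \<Longrightarrow> m \<in> L \<Longrightarrow> l \<noteq> m \<Longrightarrow> X \<in> l \<Longrightarrow> X \<in> m \<Longrightarrow> Y \<in> l \<Longrightarrow> Y \<in> m \<Longrightarrow> X = Y"
  using lines_eq by blast

lemma ln_off: "l \<in> L \<Longrightarrow> Y \<in> l \<Longrightarrow> Q \<notin> l \<Longrightarrow> ln L Y Q \<noteq> l"
  by (metis ln_B ln_in)

lemma nonpar_off: "l \<in> L \<Longrightarrow> Y \<in> l \<Longrightarrow> Q \<notin> l \<Longrightarrow> \<not> par l (ln L Y Q)"
  by (metis ln_A ln_B share_nonpar)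

lemma nonpar_off': "l \<in> L \<Longrightarrow> Y \<in> l \<Longrightarrow> Q \<notin> l \<Longrightarrow> \<not> par (ln L Y Q) l"
  using nonpar_off par_sym by blast



context
  fixes O1 I1 Q :: 'p
  assumes OI: "O1 \<noteq> I1" and Qoff: "Q \<notin> ln L O1 I1"
begin

abbreviation "l \<equiv> ln L O1 I1"

lemma l_in: "l \<in> L" and O_l: "O1 \<in> l" and I_l: "I1 \<in> l"
  using OI by auto

lemma QO: "Q \<noteq> O1" and QI: "Q \<noteq> I1" using Qoff O_l I_l by auto

lemma OQ': "O1 \<noteq> Q" and IQ': "I1 \<noteq> Q" using QO QI by auto

lemma Y_Q: "Y \<in> l \<Longrightarrow> Y \<noteq> Q" using Qoff by auto

lemma IQ_in: "ln L I1 Q \<in> L" and OQ_in: "ln L O1 Q \<in> L" using QO QI by auto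

lemma I_OQ: "I1 \<notin> ln L O1 Q"
proof
  assume "I1 \<in> ln L O1 Q"
  then have "ln L O1 Q = l" using ln_eq[OF OQ_in, of O1 I1] QO OI by (metis ln_A ln_eq)
  then show False using Qoff QO by (metis ln_B)
qed

lemma O_IQ: "O1 \<notin> ln L I1 Q"
proof
  assume "O1 \<in> ln L I1 Q"
  then have "ln L I1 Q = l" using QI OI by (metis ln_A ln_eq ln_in ln_sym)
  then show False using Qoff QI by (metis ln_B)
qed

lemma IQ_OQ_nonpar: "\<not> par (ln L I1 Q) (ln L O1 Q)"
  by (metis I_OQ QI QO ln_A ln_B share_nonpar)

lemma dil_props: "dil L O1 I1 Q X \<in> parl L X (ln L I1 Q) \<and> dil L O1 I1 Q X \<in> ln L O1 Q"
  unfolding dil_def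
  by (rule meet_props) (auto simp: IQ_in OQ_in nonpar_parl2 IQ_OQ_nonpar)

lemma dil_eq: "P \<in> parl L X (ln L I1 Q) \<Longrightarrow> P \<in> ln L O1 Q \<Longrightarrow> dil L O1 I1 Q X = P"
  unfolding dil_def
  by (rule meet_eq) (auto simp: IQ_in OQ_in nonpar_parl2 IQ_OQ_nonpar)

lemma dil_O: "dil L O1 I1 Q O1 = O1"
  by (rule dil_eq) (auto simp: IQ_in QO OQ')

lemma dil_I: "dil L O1 I1 Q I1 = Q"
  by (rule dil_eq) (auto simp: IQ_in QO QI OQ' IQ' parl_self)

lemma OQ_l: "X \<in> l \<Longrightarrow> X \<in> ln L O1 Q \<Longrightarrow> X = O1"
  using inter_unique[OF l_in OQ_in] O_l QO Qoff by (metis ln_A ln_B)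

lemma dil_nz: assumes "X \<in> l" "X \<noteq> O1" shows "dil L O1 I1 Q X \<noteq> O1" "dil L O1 I1 Q X \<notin> l"
proof -
  show nz: "dil L O1 I1 Q X \<noteq> O1"
  proof
    assume "dil L O1 I1 Q X = O1"
    then have "O1 \<in> parl L X (ln L I1 Q)" using dil_props by metis
    then have "parl L X (ln L I1 Q) = l"
      using assms lines_eq[OF parl_in[OF IQ_in] l_in] parl_P[OF IQ_in] O_l by metis
    then have "par l (ln L I1 Q)" using parl_par[OF IQ_in] by metis
    moreover have "l \<noteq> ln L I1 Q" using O_IQ O_l by blast
    ultimately show False using I_l QI share_nonpar by (metis ln_A)
  qed
  show "dil L O1 I1 Q X \<notin> l" using nz OQ_l dil_props by blast
qed

lemma dil_Q: assumes "X \<in> l" "dil L O1 I1 Q X = Q" shows "X = I1"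
proof -
  have "Q \<in> parl L X (ln L I1 Q)" using dil_props assms by metis
  then have "parl L X (ln L I1 Q) = ln L I1 Q"
    by (metis IQ_in QI ln_B parl_same parl_self)
  then have "X \<in> ln L I1 Q" using IQ_in parl_P by metis
  then show ?thesis using assms(1) inter_unique[OF l_in IQ_in] I_l QI Qoff
    by (metis ln_A ln_B)
qed

lemma YQ_in: "Y \<in> l \<Longrightarrow> ln L Y Q \<in> L" using Y_Q by auto

lemma mulQ_props: "Y \<in> l \<Longrightarrow> mulQ L O1 I1 Q X Y \<in> l \<and> mulQ L O1 I1 Q X Y \<in> parl L (dil L O1 I1 Q X) (ln L Y Q)"
  unfolding mulQ_def
  by (rule meet_props) (auto simp: l_in YQ_in nonpar_parl nonpar_off Qoff)

lemma mulQ_eq: "Y \<in> l \<Longrightarrow> C \<in> l \<Longrightarrow> C \<in> parl L (dil L O1 I1 Q X) (ln L Y Q) \<Longrightarrow> mulQ L O1 I1 Q X Y = C"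
  unfolding mulQ_def
  by (rule meet_eq) (auto simp: l_in YQ_in nonpar_parl nonpar_off Qoff)

lemma mulQ_O_left: "Y \<in> l \<Longrightarrow> mulQ L O1 I1 Q O1 Y = O1"
  by (rule mulQ_eq) (auto simp: dil_O O_l YQ_in)

lemma mulQ_O_right: "mulQ L O1 I1 Q X O1 = O1"
proof (rule mulQ_eq)
  have "parl L (dil L O1 I1 Q X) (ln L O1 Q) = ln L O1 Q"
    using dil_props OQ_in parl_self by blast
  then show "O1 \<in> parl L (dil L O1 I1 Q X) (ln L O1 Q)" using QO by simp
qed (auto simp: O_l)

lemma mulQ_I_right: "X \<in> l \<Longrightarrow> mulQ L O1 I1 Q X I1 = X"
proof (rule mulQ_eq)
  have "parl L (dil L O1 I1 Q X) (ln L I1 Q) = parl L X (ln L I1 Q)"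
    using dil_props IQ_in parl_same by blast
  then show "X \<in> parl L (dil L O1 I1 Q X) (ln L I1 Q)" using IQ_in by simp
qed (auto simp: I_l)

lemma mulQ_I_left: "Y \<in> l \<Longrightarrow> mulQ L O1 I1 Q I1 Y = Y"
proof (rule mulQ_eq)
  assume Y: "Y \<in> l"
  then have "parl L Q (ln L Y Q) = ln L Y Q" using Y_Q by (simp add: parl_self)
  then show "Y \<in> parl L (dil L O1 I1 Q I1) (ln L Y Q)" using Y Y_Q by (simp add: dil_I)
qed

end
end


context dap
begin

lemma dil_line:
  assumes OI: "O1 \<noteq> I1" and Qoff: "Q \<notin> ln L O1 I1" and X: "X \<in> ln L O1 I1" "X \<noteq> O1"
  shows "ln L X (dil L O1 I1 Q X) = parl L X (ln L I1 Q)"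
    "par (ln L I1 Q) (ln L X (dil L O1 I1 Q X))"
    "X \<noteq> I1 \<Longrightarrow> ln L I1 Q \<noteq> ln L X (dil L O1 I1 Q X)"
    "X \<noteq> I1 \<Longrightarrow> ln L Q (dil L O1 I1 Q X) = ln L O1 Q"
    "dil L O1 I1 Q X \<in> ln L O1 Q"
    "X \<noteq> I1 \<Longrightarrow> dil L O1 I1 Q X \<noteq> Q"
proof -
  note dp = dil_props[OF OI Qoff, of X]
  note nz = dil_nz[OF OI Qoff X]
  have XP: "X \<noteq> dil L O1 I1 Q X" using X nz by auto
  show e: "ln L X (dil L O1 I1 Q X) = parl L X (ln L I1 Q)"
    using ln_parl[OF IQ_in[OF OI Qoff]] dp XP by metis
  show "par (ln L I1 Q) (ln L X (dil L O1 I1 Q X))"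
    unfolding e by (rule par_sym, rule parl_par, rule IQ_in[OF OI Qoff])
  show "X \<noteq> I1 \<Longrightarrow> ln L I1 Q \<noteq> ln L X (dil L O1 I1 Q X)"
  proof
    assume XI: "X \<noteq> I1" and "ln L I1 Q = ln L X (dil L O1 I1 Q X)"
    then have "X \<in> ln L I1 Q" using XP by simp
    then have "X = I1" using inter_unique[OF ln_in[OF OI] IQ_in[OF OI Qoff]] X ln_B[OF OI] QI[OF OI Qoff] Qoff
      by (metis ln_A ln_B)
    then show False using XI by simp
  qed
  show "dil L O1 I1 Q X \<in> ln L O1 Q" using dp by simp
  show "X \<noteq> I1 \<Longrightarrow> dil L O1 I1 Q X \<noteq> Q" using dil_Q[OF OI Qoff X(1)] by blast
  show "X \<noteq> I1 \<Longrightarrow> ln L Q (dil L O1 I1 Q X) = ln L O1 Q"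
  proof -
    assume "X \<noteq> I1"
    then have ne: "Q \<noteq> dil L O1 I1 Q X" using dil_Q[OF OI Qoff X(1)] by metis
    show ?thesis
      by (rule ln_eq[OF OQ_in[OF OI Qoff] _ _ ne]) (use dp QO[OF OI Qoff] in auto)
  qed
qed

lemma W1:
  assumes OI: "O1 \<noteq> I1" and Q: "Q \<notin> ln L O1 I1" and Q': "Q' \<notin> ln L O1 I1"
    and QQ: "Q' \<notin> ln L O1 Q" and X: "X \<in> ln L O1 I1"
  shows "dil L O1 I1 Q' X \<in> parl L (dil L O1 I1 Q X) (ln L Q Q')"
proof -
  have QneQ: "Q \<noteq> Q'" using QQ QO[OF OI Q] by (metis ln_B)
  have QQin: "ln L Q Q' \<in> L" using QneQ by simp
  consider "X = O1" | "X = I1" | "X \<noteq> O1" "X \<noteq> I1" by blast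
  then show ?thesis
  proof cases
    case 1
    then show ?thesis using dil_O[OF OI Q] dil_O[OF OI Q'] QQin by simp
  next
    case 2
    then show ?thesis using dil_I[OF OI Q] dil_I[OF OI Q'] QQin QneQ by (simp add: parl_self)
  next
    case 3
    define P1 where "P1 = dil L O1 I1 Q X"
    define P2 where "P2 = dil L O1 I1 Q' X"
    note d1 = dil_line[OF OI Q X 3(1), folded P1_def]
    note d2 = dil_line[OF OI Q' X 3(1), folded P2_def]
    note n1 = dil_nz[OF OI Q X 3(1), folded P1_def]
    note n2 = dil_nz[OF OI Q' X 3(1), folded P2_def]
    have lines: "ln L O1 Q \<noteq> ln L O1 Q'" using QQ QO[OF OI Q'] by (metis ln_B)
    have P12: "P1 \<noteq> P2"
      using inter_unique[OF OQ_in[OF OI Q] OQ_in[OF OI Q'] lines] d1(5) d2(5) n1(1)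
        QO[OF OI Q] QO[OF OI Q'] by (metis ln_A)
    have "par (ln L Q Q') (ln L P1 P2)"
    proof (rule desarg[of Q P1 I1 X Q' P2])
      show "Q \<noteq> P1" using d1(6) 3 by auto
      show "I1 \<noteq> X" using 3 by auto
      show "Q' \<noteq> P2" using d2(6) 3 by auto
      show "Q \<noteq> I1" using QI[OF OI Q] .
      show "P1 \<noteq> X" using n1 X by auto
      show "I1 \<noteq> Q'" using QI[OF OI Q'] by auto
      show "X \<noteq> P2" using n2 X by auto
      show "Q \<noteq> Q'" by fact
      show "P1 \<noteq> P2" by fact
      have e1: "ln L Q P1 = ln L O1 Q" by (rule d1(4)[OF 3(2)])
      have e2: "ln L Q' P2 = ln L O1 Q'" by (rule d2(4)[OF 3(2)])
      have e3: "ln L I1 X = ln L O1 I1" using 3 X OI ln_B[OF OI] ln_in[OF OI] by (intro ln_eq) auto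
      show "ln L Q P1 \<noteq> ln L I1 X" unfolding e1 e3 using Q QO[OF OI Q] by (metis ln_B)
      show "ln L I1 X \<noteq> ln L Q' P2" unfolding e2 e3 using Q' QO[OF OI Q'] by (metis ln_B)
      show "ln L Q P1 \<noteq> ln L Q' P2" unfolding e1 e2 by fact
      show "(par (ln L Q P1) (ln L I1 X) \<and> par (ln L I1 X) (ln L Q' P2) \<and> par (ln L Q P1) (ln L Q' P2)) \<or>
        (\<exists>P. P \<in> ln L Q P1 \<and> P \<in> ln L I1 X \<and> P \<in> ln L Q' P2)"
        unfolding e1 e2 e3 using OI QO[OF OI Q] QO[OF OI Q'] by (metis ln_A)
      show "par (ln L Q I1) (ln L P1 X)" using d1(2) by (metis ln_sym)
      show "ln L Q I1 \<noteq> ln L P1 X" using d1(3)[OF 3(2)] by (metis ln_sym)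
      show "par (ln L I1 Q') (ln L X P2)" using d2(2) by (metis ln_sym)
      show "ln L I1 Q' \<noteq> ln L X P2" using d2(3)[OF 3(2)] by (metis ln_sym)
    qed
    then have "par (ln L P1 P2) (ln L Q Q')" by (rule par_sym)
    then show ?thesis unfolding P1_def[symmetric] P2_def[symmetric]
      using in_parl_iff[OF QQin] P12 by metis
  qed
qed


lemma W2:
  assumes OI: "O1 \<noteq> I1" and Q: "Q \<notin> ln L O1 I1" and Q': "Q' \<notin> ln L O1 I1"
    and QQ: "Q' \<notin> ln L O1 Q" and X: "X \<in> ln L O1 I1" and Y: "Y \<in> ln L O1 I1"
  shows "mulQ L O1 I1 Q X Y = mulQ L O1 I1 Q' X Y"
proof -
  have QneQ: "Q \<noteq> Q'" using QQ QO[OF OI Q] by (metis ln_B)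
  have QQin: "ln L Q Q' \<in> L" using QneQ by simp
  consider "Y = O1" | "X = O1" | "X = I1" | "X \<noteq> O1" "X \<noteq> I1" "Y \<noteq> O1" by blast
  then show ?thesis
  proof cases
    case 1 then show ?thesis using mulQ_O_right[OF OI Q] mulQ_O_right[OF OI Q'] by simp
  next
    case 2 then show ?thesis using mulQ_O_left[OF OI Q Y] mulQ_O_left[OF OI Q' Y] by simp
  next
    case 3 then show ?thesis using mulQ_I_left[OF OI Q Y] mulQ_I_left[OF OI Q' Y] by simp
  next
    case 4
    define P1 where "P1 = dil L O1 I1 Q X"
    define P2 where "P2 = dil L O1 I1 Q' X"
    define C where "C = mulQ L O1 I1 Q X Y"
    note d1 = dil_line[OF OI Q X 4(1), folded P1_def]
    note d2 = dil_line[OF OI Q' X 4(1), folded P2_def]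
    note n1 = dil_nz[OF OI Q X 4(1), folded P1_def]
    note n2 = dil_nz[OF OI Q' X 4(1), folded P2_def]
    note w1 = W1[OF OI Q Q' QQ X, folded P1_def P2_def]
    note mp = mulQ_props[OF OI Q Y, of X, folded P1_def C_def]
    have lines: "ln L O1 Q \<noteq> ln L O1 Q'" using QQ QO[OF OI Q'] by (metis ln_B)
    have P12: "P1 \<noteq> P2"
      using inter_unique[OF OQ_in[OF OI Q] OQ_in[OF OI Q'] lines] d1(5) d2(5) n1(1)
        QO[OF OI Q] QO[OF OI Q'] by (metis ln_A)
    have YQin: "ln L Y Q \<in> L" using YQ_in[OF OI Q Y] .
    have CP1: "C \<noteq> P1" using mp n1 by auto
    have CP2: "C \<noteq> P2" using mp n2 by auto
    have YQ_ne_OQ: "ln L Y Q \<noteq> ln L O1 Q"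
    proof
      assume "ln L Y Q = ln L O1 Q"
      then have "Y \<in> ln L O1 Q" using Y_Q[OF OI Q Y] by (metis ln_A)
      then show False using OQ_l[OF OI Q Y] 4 by simp
    qed
    have CY: "C \<noteq> Y"
    proof
      assume CY: "C = Y"
      have "parl L P1 (ln L Y Q) = parl L Y (ln L Y Q)" using mp CY parl_same[OF YQin] by metis
      also have "\<dots> = ln L Y Q" using YQin Y_Q[OF OI Q Y] by (simp add: parl_self)
      finally have "P1 \<in> ln L Y Q" using parl_P[OF YQin, of P1] by simp
      then have "P1 = Q" using inter_unique[OF YQin OQ_in[OF OI Q] YQ_ne_OQ] d1(5)
          Y_Q[OF OI Q Y] QO[OF OI Q] by (metis ln_B)
      then show False using d1(6)[OF 4(2)] by simp
    qed
    have "par (ln L Y Q') (ln L C P2)"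
    proof (rule desarg[of Y C Q P1 Q' P2])
      show "Y \<noteq> C" using CY by simp
      show "Q \<noteq> P1" using d1(6) 4 by auto
      show "Q' \<noteq> P2" using d2(6) 4 by auto
      show "Y \<noteq> Q" using Y_Q[OF OI Q Y] .
      show "C \<noteq> P1" by fact
      show "Q \<noteq> Q'" by fact
      show "P1 \<noteq> P2" by fact
      show "Y \<noteq> Q'" using Y_Q[OF OI Q' Y] .
      show "C \<noteq> P2" by fact
      have e1: "ln L Q P1 = ln L O1 Q" by (rule d1(4)[OF 4(2)])
      have e2: "ln L Q' P2 = ln L O1 Q'" by (rule d2(4)[OF 4(2)])
      have e3: "ln L Y C = ln L O1 I1" using CY mp Y ln_in[OF OI] by (intro ln_eq) auto
      show "ln L Y C \<noteq> ln L Q P1" unfolding e1 e3 using Q QO[OF OI Q] by (metis ln_B)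
      show "ln L Q P1 \<noteq> ln L Q' P2" unfolding e1 e2 by fact
      show "ln L Y C \<noteq> ln L Q' P2" unfolding e2 e3 using Q' QO[OF OI Q'] by (metis ln_B)
      show "(par (ln L Y C) (ln L Q P1) \<and> par (ln L Q P1) (ln L Q' P2) \<and> par (ln L Y C) (ln L Q' P2)) \<or>
        (\<exists>P. P \<in> ln L Y C \<and> P \<in> ln L Q P1 \<and> P \<in> ln L Q' P2)"
        unfolding e1 e2 e3 using OI QO[OF OI Q] QO[OF OI Q'] by (metis ln_A)
      have "par (ln L P1 C) (ln L Y Q)" using par_ln_parl[OF YQin] mp CP1 by metis
      then show "par (ln L Y Q) (ln L C P1)" by (metis par_sym ln_sym)
      show "ln L Y Q \<noteq> ln L C P1"
      proof
        assume "ln L Y Q = ln L C P1"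
        then have "C \<in> ln L Y Q" using CP1 by simp
        then show False using inter_unique[OF YQin ln_in[OF OI] ln_off[OF ln_in[OF OI] Y Q]] mp Y
            Y_Q[OF OI Q Y] CY by (metis ln_A)
      qed
      have "par (ln L P1 P2) (ln L Q Q')" using par_ln_parl[OF QQin] w1 P12 by metis
      then show "par (ln L Q Q') (ln L P1 P2)" by (rule par_sym)
      show "ln L Q Q' \<noteq> ln L P1 P2"
      proof
        assume "ln L Q Q' = ln L P1 P2"
        then have "P1 \<in> ln L Q Q'" using P12 by simp
        moreover have "ln L Q Q' \<noteq> ln L O1 Q" using QQ QneQ by (metis ln_B)
        ultimately have "P1 = Q" using inter_unique[OF QQin OQ_in[OF OI Q]] d1(5) QneQ QO[OF OI Q]
          by (metis ln_A ln_B)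
        then show False using d1(6)[OF 4(2)] by simp
      qed
    qed
    then have "C \<in> parl L P2 (ln L Y Q')"
      using in_parl_iff[OF YQ_in[OF OI Q' Y]] CP2 by (metis par_sym ln_sym)
    then show ?thesis unfolding C_def[symmetric]
      by (intro mulQ_eq[OF OI Q' Y, symmetric]) (use mp P2_def in auto)
  qed
qed

lemma W:
  assumes OI: "O1 \<noteq> I1" and Q: "Q \<notin> ln L O1 I1" and Q': "Q' \<notin> ln L O1 I1"
    and X: "X \<in> ln L O1 I1" and Y: "Y \<in> ln L O1 I1"
  shows "mulQ L O1 I1 Q X Y = mulQ L O1 I1 Q' X Y"
proof (cases "Q' \<in> ln L O1 Q")
  case False then show ?thesis using W2 assms by blast
next
  case True
  have lin: "ln L O1 I1 \<in> L" using OI by simp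
  obtain R where R: "R \<in> parl L Q (ln L O1 I1)" "R \<noteq> Q"
    using other_point[OF parl_in[OF lin]] by blast
  have Rl: "R \<notin> ln L O1 I1"
  proof
    assume "R \<in> ln L O1 I1"
    then have "parl L Q (ln L O1 I1) \<inter> ln L O1 I1 \<noteq> {}" using R by blast
    then have "parl L Q (ln L O1 I1) = ln L O1 I1" using parl_par[OF lin] unfolding par_def by blast
    then show False using Q parl_P[OF lin] by metis
  qed
  have ROQ: "R \<notin> ln L O1 Q"
  proof
    assume a: "R \<in> ln L O1 Q"
    have "parl L Q (ln L O1 I1) \<noteq> ln L O1 Q"
      using parl_par[OF lin, of Q] ln_A[OF OI] QO[OF OI Q] Q unfolding par_def
      by (metis disjoint_iff ln_A ln_B)
    then show False using inter_unique[OF parl_in[OF lin] OQ_in[OF OI Q]] R a QO[OF OI Q] lin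
      by (metis ln_B parl_P)
  qed
  have QOR: "Q' \<notin> ln L O1 R"
  proof
    assume a: "Q' \<in> ln L O1 R"
    have Q'O: "Q' \<noteq> O1" using Q' ln_A[OF OI] by auto
    have RO: "R \<noteq> O1" using Rl ln_A[OF OI] by auto
    have "ln L O1 R = ln L O1 Q'" using a Q'O RO by (metis ln_A ln_eq ln_in)
    also have "\<dots> = ln L O1 Q" using True Q'O QO[OF OI Q] by (metis ln_A ln_eq ln_in)
    finally show False using ROQ RO by (metis ln_B)
  qed
  have "mulQ L O1 I1 Q X Y = mulQ L O1 I1 R X Y" using W2[OF OI Q Rl ROQ X Y] .
  also have "\<dots> = mulQ L O1 I1 Q' X Y" using W2[OF OI Rl Q' QOR X Y] .
  finally show ?thesis .
qed

lemma mul_line_any: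
  assumes OI: "O1 \<noteq> I1" and Q: "Q \<notin> ln L O1 I1"
    and X: "X \<in> ln L O1 I1" and Y: "Y \<in> ln L O1 I1"
  shows "mul_line L O1 I1 X Y = mulQ L O1 I1 Q X Y"
proof -
  have "\<exists>B1. B1 \<notin> ln L O1 I1" using point_off OI by simp
  then have "(SOME B1. B1 \<notin> ln L O1 I1) \<notin> ln L O1 I1" by (rule someI_ex)
  then show ?thesis unfolding mul_line_mulQ using W assms by blast
qed

end


context dap
begin

lemma inv_exists:
  assumes OI: "O1 \<noteq> I1" and B: "B \<in> ln L O1 I1" "B \<noteq> O1"
  shows "\<exists>Y. Y \<in> ln L O1 I1 \<and> mul_line L O1 I1 B Y = I1 \<and> mul_line L O1 I1 Y B = I1"
proof -
  have lin: "ln L O1 I1 \<in> L" using OI by simp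
  obtain Q where Q: "Q \<notin> ln L O1 I1" using point_off[OF lin] by blast
  define P1 where "P1 = dil L O1 I1 Q B"
  note n1 = dil_nz[OF OI Q B, folded P1_def]
  note d1 = dil_line[OF OI Q B(1) B(2), folded P1_def]
  have P1I: "P1 \<noteq> I1" using n1 OI by auto
  define k where "k = ln L P1 I1"
  have kin: "k \<in> L" and P1k: "P1 \<in> k" and Ik: "I1 \<in> k" using P1I k_def by auto
  have kl: "\<not> par (ln L O1 I1) k"
    using share_nonpar[of "ln L O1 I1" k I1] Ik OI n1 P1k by auto
  define Y where "Y = meet (ln L O1 I1) (parl L Q k)"
  have Y: "Y \<in> ln L O1 I1" "Y \<in> parl L Q k"
    using meet_props[OF lin parl_in[OF kin] nonpar_parl[OF lin kin kl]] Y_def by auto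
  have YQ: "Y \<noteq> Q" using Y Q by auto
  have lnYQ: "ln L Y Q = parl L Q k" using ln_parl[OF kin Y(2) YQ] ln_sym by metis
  have YO: "Y \<noteq> O1"
  proof
    assume "Y = O1"
    then have "parl L Q k = ln L O1 Q" using lnYQ by simp
    then have "P1 \<in> parl L Q k" using d1(5) by simp
    then have "parl L Q k = k" using P1k parl_same[OF kin] parl_self[OF kin] by metis
    then have "I1 \<in> ln L O1 Q" using \<open>parl L Q k = ln L O1 Q\<close> Ik by simp
    then show False using I_OQ[OF OI Q] by simp
  qed
  have m1: "mulQ L O1 I1 Q B Y = I1"
  proof (rule mulQ_eq[OF OI Q Y(1)])
    show "I1 \<in> ln L O1 I1" using OI by simp
    have "parl L P1 (ln L Y Q) = parl L P1 k"
      unfolding lnYQ by (rule parl_cong[OF parl_in[OF kin] kin parl_par[OF kin]])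
    also have "\<dots> = k" using parl_self[OF kin P1k] .
    finally show "I1 \<in> parl L (dil L O1 I1 Q B) (ln L Y Q)" using Ik P1_def by simp
  qed
  have P1off: "P1 \<notin> ln L O1 I1" using n1 by simp
  have dQ: "dil L O1 I1 P1 Y = Q"
  proof (rule dil_eq[OF OI P1off])
    have "ln L O1 P1 = ln L O1 Q" using d1(5) n1(1) QO[OF OI Q] OQ_in[OF OI Q]
      by (metis ln_A ln_eq)
    then show "Q \<in> ln L O1 P1" using QO[OF OI Q] by simp
    have "parl L Y (ln L I1 P1) = parl L Y k" unfolding k_def by (simp add: ln_sym)
    also have "\<dots> = parl L Q k" using parl_same[OF kin Y(2)] .
    finally show "Q \<in> parl L Y (ln L I1 P1)" using kin by simp
  qed
  have m2: "mulQ L O1 I1 P1 Y B = I1"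
  proof (rule mulQ_eq[OF OI P1off B(1)])
    show "I1 \<in> ln L O1 I1" using OI by simp
    have IQin: "ln L I1 Q \<in> L" using IQ_in[OF OI Q] .
    have "ln L B P1 = parl L B (ln L I1 Q)" using d1(1) .
    then have "parl L Q (ln L B P1) = parl L Q (ln L I1 Q)"
      using parl_cong[OF parl_in[OF IQin] IQin parl_par[OF IQin]] by simp
    also have "\<dots> = ln L I1 Q" using parl_self[OF IQin] QI[OF OI Q] by simp
    finally show "I1 \<in> parl L (dil L O1 I1 P1 Y) (ln L B P1)" using dQ QI[OF OI Q] by simp
  qed
  show ?thesis
    using m1 m2 mul_line_any[OF OI Q B(1) Y(1)] mul_line_any[OF OI P1off Y(1) B(1)] Y(1) by metis
qed

lemma left_cancel:
  assumes OI: "O1 \<noteq> I1" and B: "B \<in> ln L O1 I1" "B \<noteq> O1"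
    and Y: "Y \<in> ln L O1 I1" and Z: "Z \<in> ln L O1 I1"
    and e: "mul_line L O1 I1 B Y = I1" "mul_line L O1 I1 B Z = I1"
  shows "Y = Z"
proof -
  have lin: "ln L O1 I1 \<in> L" using OI by simp
  obtain Q where Q: "Q \<notin> ln L O1 I1" using point_off[OF lin] by blast
  define P1 where "P1 = dil L O1 I1 Q B"
  note n1 = dil_nz[OF OI Q B, folded P1_def]
  have P1I: "P1 \<noteq> I1" using n1 OI by auto
  have YQin: "ln L Y Q \<in> L" and ZQin: "ln L Z Q \<in> L" using Y Z Q by (metis ln_in)+
  have "I1 \<in> parl L P1 (ln L Y Q)"
    using mulQ_props[OF OI Q Y, of B] e(1) mul_line_any[OF OI Q B(1) Y] P1_def by metis
  moreover have "I1 \<in> parl L P1 (ln L Z Q)"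
    using mulQ_props[OF OI Q Z, of B] e(2) mul_line_any[OF OI Q B(1) Z] P1_def by metis
  ultimately have eq: "parl L P1 (ln L Y Q) = parl L P1 (ln L Z Q)"
    using lines_eq[OF parl_in[OF YQin] parl_in[OF ZQin]] P1I parl_P YQin ZQin by metis
  have "par (ln L Y Q) (ln L Z Q)"
    using par_trans[OF YQin parl_in[OF YQin] ZQin] parl_par[OF YQin, of P1] parl_par[OF ZQin, of P1]
      eq par_sym by metis
  moreover have "Q \<in> ln L Y Q" "Q \<in> ln L Z Q" using Y Z Q by (metis ln_B)+
  ultimately have "ln L Y Q = ln L Z Q" unfolding par_def by blast
  then have "Y \<in> ln L Z Q" using Y Q by (metis ln_A)
  then show ?thesis
    using inter_unique[OF ZQin lin ln_off[OF lin Z Q]] Y Z Q by (metis ln_A)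
qed

lemma inv_line_eq:
  assumes OI: "O1 \<noteq> I1" and B: "B \<in> ln L O1 I1" "B \<noteq> O1"
    and Y: "Y \<in> ln L O1 I1" "mul_line L O1 I1 B Y = I1" "mul_line L O1 I1 Y B = I1"
  shows "inv_line L O1 I1 B = Y"
  unfolding inv_line_def
  by (rule the_equality) (use Y left_cancel[OF OI B] in blast)+

end


definition prj :: "'p set set \<Rightarrow> 'p set \<Rightarrow> 'p set \<Rightarrow> 'p \<Rightarrow> 'p" where
  "prj L D l2 X = meet l2 (parl L X D)"

context dap
begin

lemma mulQ_nz:
  assumes OI: "O1 \<noteq> I1" and Q: "Q \<notin> ln L O1 I1" and X: "X \<in> ln L O1 I1" "X \<noteq> O1"
    and Y: "Y \<in> ln L O1 I1" "Y \<noteq> O1"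
  shows "mulQ L O1 I1 Q X Y \<noteq> O1"
proof
  assume C: "mulQ L O1 I1 Q X Y = O1"
  define P1 where "P1 = dil L O1 I1 Q X"
  note d1 = dil_line[OF OI Q X, folded P1_def]
  note n1 = dil_nz[OF OI Q X, folded P1_def]
  have YQin: "ln L Y Q \<in> L" using Y Q by (metis ln_in)
  have "O1 \<in> parl L P1 (ln L Y Q)" using mulQ_props[OF OI Q Y(1), of X] C P1_def by metis
  then have "parl L P1 (ln L Y Q) = ln L O1 Q"
    using lines_eq[OF parl_in[OF YQin] OQ_in[OF OI Q]] d1(5) n1(1) parl_P[OF YQin] QO[OF OI Q]
    by (metis ln_A)
  then have "par (ln L O1 Q) (ln L Y Q)" using parl_par[OF YQin] by metis
  moreover have "Q \<in> ln L O1 Q" "Q \<in> ln L Y Q" using QO[OF OI Q] Y Q by (metis ln_B)+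
  ultimately have "ln L O1 Q = ln L Y Q" unfolding par_def by blast
  then have "Y \<in> ln L O1 Q" using Y Q by (metis ln_A)
  then show False using OQ_l[OF OI Q Y(1)] Y by simp
qed

lemma mulQ_fix:
  assumes OI: "O1 \<noteq> I1" and Q: "Q \<notin> ln L O1 I1" and X: "X \<in> ln L O1 I1" "X \<noteq> O1"
    and Y: "Y \<in> ln L O1 I1" and C: "mulQ L O1 I1 Q X Y = X"
  shows "Y = I1"
proof -
  define P1 where "P1 = dil L O1 I1 Q X"
  note d1 = dil_line[OF OI Q X, folded P1_def]
  note n1 = dil_nz[OF OI Q X, folded P1_def]
  have YQin: "ln L Y Q \<in> L" using Y Q by (metis ln_in)
  have IQin: "ln L I1 Q \<in> L" using IQ_in[OF OI Q] .
  have XP: "X \<noteq> P1" using n1 X by auto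
  have a: "X \<in> parl L P1 (ln L Y Q)" using mulQ_props[OF OI Q Y, of X] C P1_def by metis
  have "P1 \<in> parl L X (ln L I1 Q)" using dil_props[OF OI Q, of X] P1_def by simp
  then have b: "parl L P1 (ln L I1 Q) = parl L X (ln L I1 Q)" using parl_same[OF IQin] by metis
  have "parl L P1 (ln L Y Q) = parl L P1 (ln L I1 Q)"
  proof (rule lines_eq[OF parl_in[OF YQin] parl_in[OF IQin]])
    show "P1 \<in> parl L P1 (ln L Y Q)" "P1 \<in> parl L P1 (ln L I1 Q)" using YQin IQin by simp_all
    show "X \<in> parl L P1 (ln L Y Q)" by (rule a)
    show "X \<in> parl L P1 (ln L I1 Q)" unfolding b using IQin by simp
    show "P1 \<noteq> X" using XP by simp
  qed
  then have "par (ln L Y Q) (ln L I1 Q)"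
    using par_trans[OF YQin parl_in[OF YQin] IQin] parl_par[OF YQin, of P1] parl_par[OF IQin, of P1]
      par_sym by metis
  moreover have "Q \<in> ln L I1 Q" "Q \<in> ln L Y Q" using QI[OF OI Q] Y Q by (metis ln_B)+
  ultimately have "ln L I1 Q = ln L Y Q" unfolding par_def by blast
  then have "Y \<in> ln L I1 Q" using Y Q by (metis ln_A)
  then show ?thesis using inter_unique[OF ln_in[OF OI] IQin] Y Q OI QI[OF OI Q]
    by (metis ln_A ln_B)
qed

context
  fixes l2 D
  assumes l2: "l2 \<in> L" and D: "D \<in> L" and D2: "\<not> par D l2"
begin

lemma prj_props: "prj L D l2 X \<in> l2 \<and> prj L D l2 X \<in> parl L X D"
  unfolding prj_def
  by (rule meet_props[OF l2 parl_in[OF D]]) (metis D D2 l2 nonpar_parl par_sym)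

lemma prj_l2: "prj L D l2 X \<in> l2" and prj_parl: "prj L D l2 X \<in> parl L X D"
  using prj_props by auto

lemma prj_eq: "Z \<in> l2 \<Longrightarrow> Z \<in> parl L X D \<Longrightarrow> prj L D l2 X = Z"
  unfolding prj_def
  by (rule meet_eq[OF l2 parl_in[OF D]]) (metis D D2 l2 nonpar_parl par_sym)+

lemma prj_parl_eq: "parl L (prj L D l2 X) D = parl L X D"
  using parl_same[OF D prj_parl] .

lemma prj_line: "prj L D l2 X \<noteq> X \<Longrightarrow> ln L X (prj L D l2 X) = parl L X D"
  using ln_parl[OF D prj_parl] by metis

lemma prj_self: "X \<in> l2 \<Longrightarrow> prj L D l2 X = X"
  using prj_eq D by simp

end

lemma parlD_ne:
  assumes "l1 \<in> L" "D \<in> L" "\<not> par D l1" "a \<in> l1" "b \<in> l1" "a \<noteq> b"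
  shows "parl L a D \<noteq> parl L b D"
proof
  assume e: "parl L a D = parl L b D"
  then have "b \<in> parl L a D" using assms parl_P by metis
  then have "parl L a D = l1" using lines_eq[OF parl_in[OF assms(2)] assms(1)] assms parl_P by metis
  then show False using parl_par[OF assms(2), of a] assms(3) par_sym by metis
qed

lemma prj_inj:
  assumes "l1 \<in> L" "l2 \<in> L" "D \<in> L" "\<not> par D l1" "\<not> par D l2" "a \<in> l1" "b \<in> l1"
    "prj L D l2 a = prj L D l2 b"
  shows "a = b"
  using parlD_ne[OF assms(1,3,4,6,7)] prj_parl_eq[OF assms(2,3,5)] assms(8) by metis

end


context dap
begin

lemma mul_zero_right:
  assumes "O1 \<noteq> I1" "X \<in> ln L O1 I1"
  shows "mul_line L O1 I1 X O1 = O1"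
proof -
  obtain Q where Q: "Q \<notin> ln L O1 I1" using point_off assms(1) ln_in by blast
  show ?thesis using mul_line_any[OF assms(1) Q assms(2)] mulQ_O_right[OF assms(1) Q] assms(1) by simp
qed

lemma mul_zero_left:
  assumes "O1 \<noteq> I1" "Y \<in> ln L O1 I1"
  shows "mul_line L O1 I1 O1 Y = O1"
proof -
  obtain Q where Q: "Q \<notin> ln L O1 I1" using point_off assms(1) ln_in by blast
  show ?thesis using mul_line_any[OF assms(1) Q _ assms(2)] mulQ_O_left[OF assms(1) Q assms(2)] assms(1) by simp
qed

lemma mul_one_right:
  assumes "O1 \<noteq> I1" "X \<in> ln L O1 I1"
  shows "mul_line L O1 I1 X I1 = X"
proof -
  obtain Q where Q: "Q \<notin> ln L O1 I1" using point_off assms(1) ln_in by blast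
  show ?thesis using mul_line_any[OF assms(1) Q assms(2)] mulQ_I_right[OF assms(1) Q assms(2)] assms(1) by simp
qed

lemma mul_in:
  assumes "O1 \<noteq> I1" "X \<in> ln L O1 I1" "Y \<in> ln L O1 I1"
  shows "mul_line L O1 I1 X Y \<in> ln L O1 I1"
proof -
  obtain Q where Q: "Q \<notin> ln L O1 I1" using point_off assms(1) ln_in by blast
  show ?thesis using mul_line_any[OF assms(1) Q assms(2,3)] mulQ_props[OF assms(1) Q assms(3)] by simp
qed

lemma caseS:
  assumes OI: "O1 \<noteq> I1" and l2: "l2 \<in> L" and D: "D \<in> L" and D1: "\<not> par D (ln L O1 I1)"
    and D2: "\<not> par D l2" and O2: "O1 \<in> l2" and ne: "l2 \<noteq> ln L O1 I1"
    and X: "X \<in> ln L O1 I1" and Y: "Y \<in> ln L O1 I1"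
  shows "prj L D l2 (mul_line L O1 I1 X Y) =
    mul_line L (prj L D l2 O1) (prj L D l2 I1) (prj L D l2 X) (prj L D l2 Y)"
proof -
  let ?l1 = "ln L O1 I1"
  have l1: "?l1 \<in> L" using OI by simp
  note pp = prj_props[OF l2 D D2]
  have pO: "prj L D l2 O1 = O1" using prj_self[OF l2 D D2 O2] .
  define I' where "I' = prj L D l2 I1"
  define X' where "X' = prj L D l2 X"
  define Y' where "Y' = prj L D l2 Y"
  have inj: "a \<in> ?l1 \<Longrightarrow> b \<in> ?l1 \<Longrightarrow> prj L D l2 a = prj L D l2 b \<Longrightarrow> a = b" for a b
    using prj_inj[OF l1 l2 D D1 D2] by blast
  have OI': "O1 \<noteq> I'" using inj[of O1 I1] OI pO I'_def by (metis ln_A ln_B)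
  have l2e: "ln L O1 I' = l2" using ln_eq[OF l2 O2 _ OI'] pp I'_def by simp
  have X'l: "X' \<in> ln L O1 I'" and Y'l: "Y' \<in> ln L O1 I'" using pp l2e X'_def Y'_def by auto
  have inter: "Z \<in> ?l1 \<Longrightarrow> Z \<in> l2 \<Longrightarrow> Z = O1" for Z
    using inter_unique[OF l1 l2] ne O2 OI by (metis ln_A)
  show ?thesis
  proof (cases "Y = O1")
    case True
    then show ?thesis
      using mul_zero_right[OF OI X] mul_zero_right[OF OI' X'l] pO
      unfolding X'_def I'_def by simp
  next
    case False
    have Y'l1: "Y' \<notin> ?l1"
    proof
      assume "Y' \<in> ?l1"
      then have "Y' = O1" using inter pp Y'_def by simp
      then show False using inj[of Y O1] Y False pO Y'_def OI by (metis ln_A)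
    qed
    have YY': "Y \<noteq> Y'" using Y'l1 Y by auto
    have I1off: "I1 \<notin> ln L O1 I'" using l2e inter OI by (metis ln_B)
    have lnI: "ln L I' I1 = parl L I1 D"
      using ln_parl[OF D] pp I'_def I1off X'l by (metis l2e ln_sym)
    have dX: "dil L O1 I' I1 X' = X"
    proof (rule dil_eq[OF OI' I1off])
      have "parl L X' (ln L I' I1) = parl L X' D"
        unfolding lnI by (rule parl_cong[OF parl_in[OF D] D parl_par[OF D]])
      also have "\<dots> = parl L X D" using prj_parl_eq[OF l2 D D2] X'_def by simp
      finally show "X \<in> parl L X' (ln L I' I1)" using D by simp
      show "X \<in> ln L O1 I1" by fact
    qed
    define C' where "C' = mulQ L O1 I' I1 X' Y'"
    have C': "C' \<in> l2" "C' \<in> parl L X (ln L Y' I1)"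
      using mulQ_props[OF OI' I1off Y'l, of X'] dX l2e C'_def by auto
    have dC: "dil L O1 I1 Y' X = C'"
    proof (rule dil_eq[OF OI Y'l1])
      show "C' \<in> parl L X (ln L I1 Y')" using C' by (simp add: ln_sym)
      have "ln L O1 Y' = l2" using ln_eq[OF l2 O2] pp Y'_def Y'l1 by (metis ln_A OI)
      then show "C' \<in> ln L O1 Y'" using C' by simp
    qed
    define C where "C = mulQ L O1 I1 Y' X Y"
    have C: "C \<in> ?l1" "C \<in> parl L C' (ln L Y Y')"
      using mulQ_props[OF OI Y'l1 Y, of X] dC C_def by auto
    have "ln L Y Y' = parl L Y D" using ln_parl[OF D] pp YY' Y'_def by metis
    then have "parl L C' (ln L Y Y') = parl L C' D"
      using parl_cong[OF parl_in[OF D] D parl_par[OF D]] by simp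
    then have "C \<in> parl L C' D" using C by simp
    then have "C' \<in> parl L C D" using parl_same[OF D] D by (metis parl_P)
    then have "prj L D l2 C = C'" using prj_eq[OF l2 D D2] C' by simp
    moreover have "mul_line L O1 I1 X Y = C" using mul_line_any[OF OI Y'l1 X Y] C_def by simp
    moreover have "mul_line L O1 I' X' Y' = C'" using mul_line_any[OF OI' I1off X'l Y'l] C'_def by simp
    ultimately show ?thesis using pO I'_def X'_def Y'_def by simp
  qed
qed

end


context dap
begin

lemma parD_all:
  assumes "D \<in> L" "a \<in> L" "b \<in> L" "par a D" "par b D" shows "par a b"
  using assms par_trans par_sym by metis

lemma caseT:
  assumes OI: "O1 \<noteq> I1" and l2: "l2 \<in> L" and D: "D \<in> L" and D1: "\<not> par D (ln L O1 I1)"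
    and D2: "\<not> par D l2" and disj: "l2 \<inter> ln L O1 I1 = {}"
    and X: "X \<in> ln L O1 I1" and Y: "Y \<in> ln L O1 I1"
  shows "prj L D l2 (mul_line L O1 I1 X Y) =
    mul_line L (prj L D l2 O1) (prj L D l2 I1) (prj L D l2 X) (prj L D l2 Y)"
proof -
  let ?l1 = "ln L O1 I1"
  let ?p = "prj L D l2"
  have l1: "?l1 \<in> L" using OI by simp
  have O1l: "O1 \<in> ?l1" and I1l: "I1 \<in> ?l1" using OI by simp_all
  note pp = prj_props[OF l2 D D2]
  have inj: "a \<in> ?l1 \<Longrightarrow> b \<in> ?l1 \<Longrightarrow> ?p a = ?p b \<Longrightarrow> a = b" for a b
    using prj_inj[OF l1 l2 D D1 D2] by blast
  define O' where "O' = ?p O1"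
  define I' where "I' = ?p I1"
  define X' where "X' = ?p X"
  define Y' where "Y' = ?p Y"
  have OI': "O' \<noteq> I'" using inj[OF O1l I1l] OI O'_def I'_def by metis
  have l2e: "ln L O' I' = l2" using ln_eq[OF l2 _ _ OI'] pp O'_def I'_def by simp
  have X'l: "X' \<in> ln L O' I'" and Y'l: "Y' \<in> ln L O' I'" using pp l2e X'_def Y'_def by auto
  have offl1: "Z \<in> l2 \<Longrightarrow> Z \<notin> ?l1" for Z using disj by blast
  have offl2: "Z \<in> ?l1 \<Longrightarrow> Z \<notin> l2" for Z using disj by blast
  have parl1l2: "par ?l1 l2" using disj unfolding par_def by blast
  have linD: "a \<in> ?l1 \<Longrightarrow> ln L a (?p a) = parl L a D" for a
    using prj_line[OF l2 D D2] pp offl2 by metis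
  have pD: "a \<in> ?l1 \<Longrightarrow> parl L a D \<noteq> ?l1" for a
    using parl_par[OF D, of a] D1 par_sym by metis
  have dne: "a \<in> ?l1 \<Longrightarrow> b \<in> ?l1 \<Longrightarrow> a \<noteq> b \<Longrightarrow> parl L a D \<noteq> parl L b D" for a b
    using parlD_ne[OF l1 D D1] by blast
  consider "Y = O1" | "X = O1" | "Y = I1" | "X \<noteq> O1" "Y \<noteq> O1" "Y \<noteq> I1" by blast
  then show ?thesis
  proof cases
    case 1
    then show ?thesis using mul_zero_right[OF OI X] mul_zero_right[OF OI' X'l]
      unfolding X'_def I'_def O'_def by simp
  next
    case 2
    then show ?thesis using mul_zero_left[OF OI Y] mul_zero_left[OF OI' Y'l]
      unfolding Y'_def I'_def O'_def by simp
  next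
    case 3
    then show ?thesis using mul_one_right[OF OI X] mul_one_right[OF OI' X'l]
      unfolding Y'_def X'_def I'_def O'_def by simp
  next
    case 4
    have I'l1: "I' \<notin> ?l1" using offl1 pp I'_def by simp
    have I1I': "I1 \<noteq> I'" using I'l1 I1l by auto
    have lnII: "ln L I1 I' = parl L I1 D" using linD[OF I1l] I'_def by simp
    have lnII_in: "ln L I1 I' \<in> L" using I1I' by simp
    have OI'_in: "ln L O1 I' \<in> L" using I'l1 O1l by (metis ln_in)
    have O1_II: "O1 \<notin> ln L I1 I'"
    proof
      assume "O1 \<in> ln L I1 I'"
      then have "ln L I1 I' = ?l1" using ln_eq[OF lnII_in _ _ OI] I1I' by (metis ln_A ln_eq ln_in)
      then show False using I'l1 I1I' by (metis ln_B)
    qed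
    have np: "\<not> par (ln L O1 I') (ln L I1 I')"
      using share_nonpar[of "ln L O1 I'" "ln L I1 I'" I'] O1_II I'l1 I1I' O1l by (metis ln_A ln_B)
    define Q' where "Q' = meet (parl L O' (ln L O1 I')) (ln L I1 I')"
    have Q': "Q' \<in> parl L O' (ln L O1 I')" "Q' \<in> ln L I1 I'"
      using meet_props[OF parl_in[OF OI'_in] lnII_in nonpar_parl2[OF OI'_in lnII_in np]] Q'_def by auto
    have Q'l2: "Q' \<notin> ln L O' I'"
    proof
      assume a: "Q' \<in> ln L O' I'"
      have "ln L I1 I' \<noteq> l2" using offl2[OF I1l] I1I' by (metis ln_A)
      then have "Q' = I'" using inter_unique[OF lnII_in l2] a l2e Q' pp I'_def I1I' by (metis ln_B)
      then have "I' \<in> parl L O' (ln L O1 I')" using Q' by simp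
      then have "parl L O' (ln L O1 I') = ln L O1 I'"
        using parl_same[OF OI'_in] parl_self[OF OI'_in] I'l1 O1l by (metis ln_B)
      then have "O' \<in> ln L O1 I'" using parl_P[OF OI'_in] by metis
      then have "ln L O1 I' = l2" using lines_eq[OF OI'_in l2, of O' I'] OI' pp O'_def I'_def
        I'l1 O1l by (metis ln_B)
      then show False using offl2[OF O1l] I'l1 O1l by (metis ln_A)
    qed
    have Q'O': "Q' \<noteq> O'" and Q'I': "Q' \<noteq> I'" and Q'Y': "Q' \<noteq> Y'"
      using Q'l2 Y'l ln_A[OF OI'] ln_B[OF OI'] by auto
    have lnO'Q': "ln L O' Q' = parl L O' (ln L O1 I')"
      using ln_parl[OF OI'_in Q'(1)] Q'O' by metis
    have OQpar: "par (ln L O1 I') (ln L O' Q')"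
      using parl_par[OF OI'_in] lnO'Q' par_sym by metis
    have OQne: "ln L O1 I' \<noteq> ln L O' Q'"
    proof
      assume e: "ln L O1 I' = ln L O' Q'"
      then have "O' \<in> ln L O1 I'" using Q'O' by (metis ln_A)
      then have "ln L O1 I' = l2" using lines_eq[OF OI'_in l2, of O' I'] OI' pp O'_def I'_def
        I'l1 O1l by (metis ln_B)
      then show False using offl2[OF O1l] I'l1 O1l by (metis ln_A)
    qed
    have OQdisj: "ln L O1 I' \<inter> ln L O' Q' = {}" using OQpar OQne unfolding par_def by blast
    have lnI'Q': "ln L I' Q' = parl L I1 D"
      using ln_eq[OF lnII_in] Q' Q'I' I1I' lnII by (metis ln_B)
    have YI'_Y'Q': "par (ln L Y I') (ln L Y' Q')"
    proof (rule desarg[of Y Y' O1 O' I' Q'])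
      show "Y \<noteq> Y'" using offl2[OF Y] pp Y'_def by metis
      show "O1 \<noteq> O'" using offl2[OF O1l] pp O'_def by metis
      show "I' \<noteq> Q'" using Q'I' by simp
      show "Y \<noteq> O1" using 4 by simp
      show "Y' \<noteq> O'" using inj[OF Y O1l] 4 Y'_def O'_def by metis
      show "O1 \<noteq> I'" using I'l1 O1l by auto
      show "O' \<noteq> Q'" using Q'O' by simp
      show "Y \<noteq> I'" using I'l1 Y by auto
      show "Y' \<noteq> Q'" using Q'Y' by simp
      have e1: "ln L Y Y' = parl L Y D" using linD[OF Y] Y'_def by simp
      have e2: "ln L O1 O' = parl L O1 D" using linD[OF O1l] O'_def by simp
      have e3: "ln L I' Q' = parl L I1 D" by (rule lnI'Q')
      show "ln L Y Y' \<noteq> ln L O1 O'" unfolding e1 e2 using dne[OF Y O1l] 4 by simp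
      show "ln L O1 O' \<noteq> ln L I' Q'" unfolding e2 e3 using dne[OF O1l I1l] OI by simp
      show "ln L Y Y' \<noteq> ln L I' Q'" unfolding e1 e3 using dne[OF Y I1l] 4 by simp
      show "(par (ln L Y Y') (ln L O1 O') \<and> par (ln L O1 O') (ln L I' Q') \<and> par (ln L Y Y') (ln L I' Q')) \<or>
        (\<exists>P. P \<in> ln L Y Y' \<and> P \<in> ln L O1 O' \<and> P \<in> ln L I' Q')"
        unfolding e1 e2 e3 using parD_all[OF D] parl_par[OF D] parl_in[OF D] by metis
      have e4: "ln L Y O1 = ?l1" using ln_eq[OF l1 Y O1l] 4 by simp
      have e5: "ln L Y' O' = l2" using ln_eq[OF l2] pp Y'_def O'_def inj[OF Y O1l] 4 by metis
      show "par (ln L Y O1) (ln L Y' O')" unfolding e4 e5 by fact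
      show "ln L Y O1 \<noteq> ln L Y' O'" unfolding e4 e5 using disj O1l by blast
      show "par (ln L O1 I') (ln L O' Q')" by fact
      show "ln L O1 I' \<noteq> ln L O' Q'" by fact
    qed
    define P1 where "P1 = dil L O1 I1 I' X"
    define P2 where "P2 = dil L O' I' Q' X'"
    have X'O': "X' \<noteq> O'" using inj[OF X O1l] 4 X'_def O'_def by metis
    note d1 = dil_line[OF OI I'l1 X 4(1), folded P1_def]
    note n1 = dil_nz[OF OI I'l1 X 4(1), folded P1_def]
    note d2 = dil_line[OF OI' Q'l2 X'l X'O', folded P2_def]
    note n2 = dil_nz[OF OI' Q'l2 X'l X'O', folded P2_def]
    have P1xd: "P1 \<in> parl L X D"
    proof -
      have "P1 \<in> parl L X (ln L I1 I')" using dil_props[OF OI I'l1, of X] P1_def by simp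
      moreover have "parl L X (ln L I1 I') = parl L X D"
        unfolding lnII by (rule parl_cong[OF parl_in[OF D] D parl_par[OF D]])
      ultimately show ?thesis by simp
    qed
    have P2xd: "P2 \<in> parl L X D"
    proof -
      have "P2 \<in> parl L X' (ln L I' Q')" using dil_props[OF OI' Q'l2, of X'] P2_def by simp
      moreover have "parl L X' (ln L I' Q') = parl L X' D"
        unfolding lnI'Q' by (rule parl_cong[OF parl_in[OF D] D parl_par[OF D]])
      moreover have "parl L X' D = parl L X D" using prj_parl_eq[OF l2 D D2] X'_def by simp
      ultimately show ?thesis by simp
    qed
    have P1l: "P1 \<in> ln L O1 I'" using d1(5) .
    have P2l: "P2 \<in> ln L O' Q'" using d2(5) .
    have P12: "P1 \<noteq> P2" using OQdisj P1l P2l by blast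
    have lnP12: "ln L P1 P2 = parl L X D" using ln_eq[OF parl_in[OF D]] P1xd P2xd P12 by simp
    define C where "C = mulQ L O1 I1 I' X Y"
    have C: "C \<in> ?l1" "C \<in> parl L P1 (ln L Y I')"
      using mulQ_props[OF OI I'l1 Y, of X] C_def P1_def by auto
    have CO: "C \<noteq> O1" using mulQ_nz[OF OI I'l1 X 4(1) Y 4(2)] C_def by simp
    have CX: "C \<noteq> X" using mulQ_fix[OF OI I'l1 X 4(1) Y] C_def 4 by metis
    define C'' where "C'' = ?p C"
    have C'': "C'' \<in> l2" "C'' \<in> parl L C D" using pp C''_def by auto
    have YI'_in: "ln L Y I' \<in> L" using Y I'l1 by (metis ln_in)
    have "par (ln L C P1) (ln L C'' P2)"
    proof (rule desarg[of C C'' O1 O' P1 P2])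
      show "C \<noteq> C''" using offl2[OF C(1)] C'' by metis
      show "O1 \<noteq> O'" using offl2[OF O1l] pp O'_def by metis
      show "P1 \<noteq> P2" by fact
      show "C \<noteq> O1" by fact
      show "C'' \<noteq> O'" using inj[OF C(1) O1l] CO C''_def O'_def by metis
      show "O1 \<noteq> P1" using n1 by simp
      show "O' \<noteq> P2" using n2 by simp
      show "C \<noteq> P1" using C n1 by auto
      show "C'' \<noteq> P2" using C'' n2 l2e by auto
      have e1: "ln L C C'' = parl L C D" using linD[OF C(1)] C''_def by simp
      have e2: "ln L O1 O' = parl L O1 D" using linD[OF O1l] O'_def by simp
      show "ln L C C'' \<noteq> ln L O1 O'" unfolding e1 e2 using dne[OF C(1) O1l] CO by simp
      show "ln L O1 O' \<noteq> ln L P1 P2" unfolding e2 lnP12 using dne[OF O1l X] 4 by simp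
      show "ln L C C'' \<noteq> ln L P1 P2" unfolding e1 lnP12 using dne[OF C(1) X] CX by simp
      show "(par (ln L C C'') (ln L O1 O') \<and> par (ln L O1 O') (ln L P1 P2) \<and> par (ln L C C'') (ln L P1 P2)) \<or>
        (\<exists>P. P \<in> ln L C C'' \<and> P \<in> ln L O1 O' \<and> P \<in> ln L P1 P2)"
        unfolding e1 e2 lnP12 using parD_all[OF D] parl_par[OF D] parl_in[OF D] by metis
      have e4: "ln L C O1 = ?l1" using ln_eq[OF l1 C(1) O1l] CO by simp
      have e5: "ln L C'' O' = l2" using ln_eq[OF l2] pp C''_def O'_def inj[OF C(1) O1l] CO by metis
      show "par (ln L C O1) (ln L C'' O')" unfolding e4 e5 by fact
      show "ln L C O1 \<noteq> ln L C'' O'" unfolding e4 e5 using disj O1l by blast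
      have e6: "ln L O1 P1 = ln L O1 I'" using ln_eq[OF OI'_in] P1l n1 I'l1 O1l by (metis ln_A)
      have e7: "ln L O' P2 = ln L O' Q'" using ln_eq P2l n2 Q'O' by (metis ln_A ln_in)
      show "par (ln L O1 P1) (ln L O' P2)" unfolding e6 e7 by fact
      show "ln L O1 P1 \<noteq> ln L O' P2" unfolding e6 e7 by fact
    qed
    moreover have "par (ln L P1 C) (ln L Y I')" using par_ln_parl[OF YI'_in C(2)] C n1 by auto
    ultimately have "par (ln L P2 C'') (ln L Y' Q')"
    proof -
      assume a1: "par (ln L C P1) (ln L C'' P2)" and a2: "par (ln L P1 C) (ln L Y I')"
      have C''P2: "C'' \<noteq> P2" using C'' n2 l2e by auto
      have CP1: "C \<noteq> P1" using C n1 by auto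
      have i1: "ln L C'' P2 \<in> L" using C''P2 by simp
      have i2: "ln L C P1 \<in> L" using CP1 by simp
      have i3: "ln L Y' Q' \<in> L" using Q'Y' by simp
      have "par (ln L C'' P2) (ln L C P1)" using a1 par_sym by blast
      moreover have "par (ln L C P1) (ln L Y I')" using a2 ln_sym by metis
      ultimately have "par (ln L C'' P2) (ln L Y I')" using par_trans[OF i1 i2 YI'_in] by blast
      then have "par (ln L C'' P2) (ln L Y' Q')" using par_trans[OF i1 YI'_in i3] YI'_Y'Q' by blast
      then show ?thesis using ln_sym by metis
    qed
    then have "C'' \<in> parl L P2 (ln L Y' Q')"
      using in_parl_iff[of "ln L Y' Q'" C'' P2] Q'Y' n2 C'' l2e by (metis ln_in)
    then have "mulQ L O' I' Q' X' Y' = C''"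
      using mulQ_eq[OF OI' Q'l2 Y'l] C'' l2e P2_def by simp
    moreover have "mul_line L O1 I1 X Y = C" using mul_line_any[OF OI I'l1 X Y] C_def by simp
    moreover have "mul_line L O' I' X' Y' = mulQ L O' I' Q' X' Y'"
      using mul_line_any[OF OI' Q'l2 X'l Y'l] by simp
    ultimately show ?thesis using C''_def O'_def I'_def X'_def Y'_def by simp
  qed
qed

end


context dap
begin

lemma hom:
  assumes OI: "O1 \<noteq> I1" and l2: "l2 \<in> L" and D: "D \<in> L" and D1: "\<not> par D (ln L O1 I1)"
    and D2: "\<not> par D l2" and X: "X \<in> ln L O1 I1" and Y: "Y \<in> ln L O1 I1"
  shows "prj L D l2 (mul_line L O1 I1 X Y) =
    mul_line L (prj L D l2 O1) (prj L D l2 I1) (prj L D l2 X) (prj L D l2 Y)"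
proof -
  let ?l1 = "ln L O1 I1"
  have l1: "?l1 \<in> L" using OI by simp
  have O1l: "O1 \<in> ?l1" and I1l: "I1 \<in> ?l1" using OI by simp_all
  consider "l2 = ?l1" | "l2 \<inter> ?l1 = {}" | "O1 \<in> l2" "l2 \<noteq> ?l1" | "l2 \<inter> ?l1 \<noteq> {}" "O1 \<notin> l2" "l2 \<noteq> ?l1"
    by blast
  then show ?thesis
  proof cases
    case 1
    have s: "a \<in> ?l1 \<Longrightarrow> prj L D l2 a = a" for a using prj_self[OF l2 D D2] 1 by simp
    show ?thesis using s[OF mul_in[OF OI X Y]] s[OF O1l] s[OF I1l] s[OF X] s[OF Y] by simp
  next
    case 2 then show ?thesis using caseT[OF OI l2 D D1 D2 _ X Y] by blast
  next
    case 3 then show ?thesis using caseS[OF OI l2 D D1 D2 _ _ X Y] by blast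
  next
    case 4
    define O' where "O' = prj L D l2 O1"
    define m where "m = parl L O' ?l1"
    have m: "m \<in> L" "O' \<in> m" "par m ?l1" using m_def l1 parl_props by auto
    have O'l2: "O' \<in> l2" "O' \<in> parl L O1 D" using prj_props[OF l2 D D2] O'_def by auto
    have O'l1: "O' \<notin> ?l1"
    proof
      assume a: "O' \<in> ?l1"
      have "parl L O1 D \<noteq> ?l1" using parl_par[OF D, of O1] D1 par_sym by metis
      then have "O' = O1" using inter_unique[OF parl_in[OF D] l1] a O'l2 O1l parl_P[OF D] by metis
      then show False using O'l2 4 by simp
    qed
    have mdisj: "m \<inter> ?l1 = {}" using m O'l1 unfolding par_def by blast
    have Dm: "\<not> par D m" using par_trans[OF D m(1) l1] m(3) D1 by blast
    note T = caseT[OF OI m(1) D D1 Dm _ X Y, OF _] 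
    have T': "prj L D m (mul_line L O1 I1 X Y) =
      mul_line L (prj L D m O1) (prj L D m I1) (prj L D m X) (prj L D m Y)"
      using caseT[OF OI m(1) D D1 Dm _ X Y] mdisj by (simp add: Int_commute)
    have p1O: "prj L D m O1 = O'" using prj_eq[OF m(1) D Dm] m O'l2 by simp
    define I'' where "I'' = prj L D m I1"
    have injm: "a \<in> ?l1 \<Longrightarrow> b \<in> ?l1 \<Longrightarrow> prj L D m a = prj L D m b \<Longrightarrow> a = b" for a b
      using prj_inj[OF l1 m(1) D D1 Dm] by blast
    have OI'': "O' \<noteq> I''" using injm[OF O1l I1l] OI p1O I''_def by metis
    have me: "ln L O' I'' = m" using ln_eq[OF m(1) m(2) _ OI''] prj_props[OF m(1) D Dm] I''_def by simp
    have l2m: "l2 \<noteq> m" using 4 mdisj by blast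
    have U: "prj L D m X \<in> ln L O' I''" and V: "prj L D m Y \<in> ln L O' I''"
      using prj_props[OF m(1) D Dm] me by auto
    have S: "prj L D l2 (mul_line L O' I'' (prj L D m X) (prj L D m Y)) =
      mul_line L (prj L D l2 O') (prj L D l2 I'') (prj L D l2 (prj L D m X)) (prj L D l2 (prj L D m Y))"
      using caseS[OF OI'' l2 D _ D2 O'l2(1) _ U V] me Dm l2m by simp
    have comp: "prj L D l2 (prj L D m a) = prj L D l2 a" for a
    proof (rule prj_eq[OF l2 D D2])
      show "prj L D l2 a \<in> l2" using prj_props[OF l2 D D2] by simp
      have "parl L (prj L D m a) D = parl L a D" using prj_parl_eq[OF m(1) D Dm] .
      then show "prj L D l2 a \<in> parl L (prj L D m a) D" using prj_props[OF l2 D D2] by simp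
    qed
    show ?thesis using T' S comp p1O I''_def by (metis)
  qed
qed

end

theorem mainTheorem9:
  fixes L :: "'p set set" and O1 I1 :: 'p and l2 :: "'p set"
    and P :: "'p \<Rightarrow> 'p" and A B :: 'p
  assumes "desargues_affine_plane L"
    and "O1 \<noteq> I1"
    and "parallel_projection L (ln L O1 I1) l2 P"
    and "A \<in> ln L O1 I1" and "B \<in> ln L O1 I1" and "B \<noteq> O1"
  shows "P (ratio L O1 I1 A B) = ratio L (P O1) (P I1) (P A) (P B)"
proof -
  interpret dap L using assms(1,2) by unfold_locales blast+
  note OI = assms(2)
  let ?l1 = "ln L O1 I1"
  have l1: "?l1 \<in> L" using OI by simp
  have O1l: "O1 \<in> ?l1" and I1l: "I1 \<in> ?l1" using OI by simp_all
  have l2: "l2 \<in> L" and bij: "bij_betw P ?l1 l2"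
    using assms(3) unfolding parallel_projection_def by auto
  obtain d where d: "d \<in> L" "\<not> par d ?l1" and dP: "\<And>a. a \<in> ?l1 \<Longrightarrow> P a \<noteq> a \<Longrightarrow> par (ln L a (P a)) d"
    using assms(3) unfolding parallel_projection_def by blast
  have Pl2: "a \<in> ?l1 \<Longrightarrow> P a \<in> l2" for a using bij bij_betw_apply by metis
  have injP: "a \<in> ?l1 \<Longrightarrow> b \<in> ?l1 \<Longrightarrow> P a = P b \<Longrightarrow> a = b" for a b
    using bij unfolding bij_betw_def inj_on_def by blast
  have d2: "\<not> par d l2"
  proof
    assume pd: "par d l2"
    have inl2: "a \<in> l2" if a: "a \<in> ?l1" for a
    proof (cases "P a = a")
      case True then show ?thesis using Pl2[OF a] by simp
    next
      case False
      have lin: "ln L a (P a) \<in> L" using False by simp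
      have "par (ln L a (P a)) l2" using par_trans[OF lin d(1) l2] dP[OF a False] pd by blast
      moreover have "P a \<in> ln L a (P a)" using False by simp
      ultimately have "ln L a (P a) = l2" using Pl2[OF a] unfolding par_def by blast
      then show ?thesis using False by (metis ln_A)
    qed
    have "l2 = ?l1" using lines_eq[OF l2 l1 inl2[OF O1l] inl2[OF I1l] O1l I1l OI] .
    then show False using pd d by simp
  qed
  have Pp: "P a = prj L d l2 a" if a: "a \<in> ?l1" for a
  proof (cases "P a = a")
    case True
    then show ?thesis using prj_self[OF l2 d(1) d2] Pl2[OF a] by simp
  next
    case False
    have lin: "ln L a (P a) \<in> L" using False by simp
    have "parl L a d = ln L a (P a)" using parl_eq[OF d(1) lin] dP[OF a False] False by simp
    then have "P a \<in> parl L a d" using False by simp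
    then show ?thesis using prj_eq[OF l2 d(1) d2] Pl2[OF a] by simp
  qed
  obtain Y where Y: "Y \<in> ?l1" "mul_line L O1 I1 B Y = I1" "mul_line L O1 I1 Y B = I1"
    using inv_exists[OF OI assms(5,6)] by blast
  have invB: "inv_line L O1 I1 B = Y" using inv_line_eq[OF OI assms(5,6) Y] .
  let ?p = "prj L d l2"
  have h: "a \<in> ?l1 \<Longrightarrow> b \<in> ?l1 \<Longrightarrow> ?p (mul_line L O1 I1 a b) = mul_line L (?p O1) (?p I1) (?p a) (?p b)" for a b
    using hom[OF OI l2 d(1) d(2) d2] by blast
  have OI2: "P O1 \<noteq> P I1" using injP[OF O1l I1l] OI by blast
  have l2e: "ln L (P O1) (P I1) = l2" using ln_eq[OF l2 Pl2[OF O1l] Pl2[OF I1l] OI2] .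
  have PB: "P B \<in> ln L (P O1) (P I1)" "P B \<noteq> P O1" using l2e Pl2 assms(5,6) injP[OF assms(5) O1l] by auto
  have PY: "P Y \<in> ln L (P O1) (P I1)" using l2e Pl2 Y(1) by auto
  have m1: "mul_line L (P O1) (P I1) (P B) (P Y) = P I1"
    using h[OF assms(5) Y(1)] Y(2) Pp[OF O1l] Pp[OF I1l] Pp[OF assms(5)] Pp[OF Y(1)] Pp[OF mul_in[OF OI assms(5) Y(1)]]
    by simp
  have m2: "mul_line L (P O1) (P I1) (P Y) (P B) = P I1"
    using h[OF Y(1) assms(5)] Y(3) Pp[OF O1l] Pp[OF I1l] Pp[OF assms(5)] Pp[OF Y(1)] Pp[OF mul_in[OF OI Y(1) assms(5)]]
    by simp
  have invPB: "inv_line L (P O1) (P I1) (P B) = P Y" using inv_line_eq[OF OI2 PB PY m1 m2] .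
  have "P (ratio L O1 I1 A B) = P (mul_line L O1 I1 Y A)" unfolding ratio_def invB ..
  also have "\<dots> = mul_line L (P O1) (P I1) (P Y) (P A)"
    using h[OF Y(1) assms(4)] Pp[OF O1l] Pp[OF I1l] Pp[OF assms(4)] Pp[OF Y(1)] Pp[OF mul_in[OF OI Y(1) assms(4)]]
    by simp
  also have "\<dots> = ratio L (P O1) (P I1) (P A) (P B)" unfolding ratio_def invPB ..
  finally show ?thesis .
qed


end
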